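(* Let $G$ be a finite graph with maximum degree $\Delta$ and average degree $d\geq \Delta^{3/4}$. Then $G$ contains a $C_4$-free subgraph with average degree at least $d\cdot \Delta^{-3/4}/4$.
   Context: Average degree of $G$ is $2e(G)/|V(G)|$. A graph is $C_4$-free if it contains no $4$-cycle as a subgraph. *)

theory Defs
  imports Complex_Main
begin

definition graph :: "'a set \<Rightarrow> 'a set set \<Rightarrow> bool" where
  "graph V E \<longleftrightarrow> finite V \<and> (\<forall>e\<in>E. e \<subseteq> V \<and> card e = 2)"

definition degree :: "'a set set \<Rightarrow> 'a \<Rightarrow> nat" where
  "degree E v = card {e \<in> E. v \<in> e}"

definition max_degree :: "'a set \<Rightarrow> 'a set set \<Rightarrow> nat" where
  "max_degree V E = Max (degree E ` V)"

definition avg_degree :: "'a set \<Rightarrow> 'a set set \<Rightarrow> real" where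
  "avg_degree V E = 2 * real (card E) / real (card V)"

definition subgraph :: "'a set \<Rightarrow> 'a set set \<Rightarrow> 'a set \<Rightarrow> 'a set set \<Rightarrow> bool" where
  "subgraph V' E' V E \<longleftrightarrow> V' \<subseteq> V \<and> E' \<subseteq> E \<and> (\<forall>e\<in>E'. e \<subseteq> V')"

definition C4_free :: "'a set set \<Rightarrow> bool" where
  "C4_free E \<longleftrightarrow> \<not> (\<exists>a b c d. distinct [a, b, c, d] \<and>
      {a, b} \<in> E \<and> {b, c} \<in> E \<and> {c, d} \<in> E \<and> {d, a} \<in> E)"

end

theory Submission
  imports Defs
begin

definition nbr :: "'a set set \<Rightarrow> 'a \<Rightarrow> 'a set" where
  "nbr H x = {u. {x, u} \<in> H}"

lemma handshake:
  assumes "graph V E" "H \<subseteq> E"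
  shows "(\<Sum>v\<in>V. degree H v) = 2 * card H"
proof -
  have fV: "finite V" using assms unfolding graph_def by auto
  have fE: "finite E" using assms unfolding graph_def
    by (meson Pow_iff finite_Pow_iff finite_subset subsetI)
  hence fH: "finite H" using assms(2) finite_subset by blast
  have "(\<Sum>v\<in>V. degree H v) = (\<Sum>v\<in>V. \<Sum>e\<in>H. if v \<in> e then 1 else 0)"
    unfolding degree_def using fH by (simp add: sum.If_cases) (auto intro!: sum.cong arg_cong[where f=card])
  also have "\<dots> = (\<Sum>e\<in>H. \<Sum>v\<in>V. if v \<in> e then 1 else 0)" by (rule sum.swap)
  also have "\<dots> = (\<Sum>e\<in>H. card e)"
  proof (rule sum.cong)
    fix e assume "e \<in> H"
    hence "e \<subseteq> V" using assms unfolding graph_def by auto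
    hence "V \<inter> e = e" by auto
    thus "(\<Sum>v\<in>V. if v \<in> e then 1 else 0) = card e"
      using fV by (simp add: sum.If_cases)
  qed simp
  also have "\<dots> = (\<Sum>e\<in>H. 2)"
    using assms unfolding graph_def by (intro sum.cong) auto
  finally show ?thesis by simp
qed

lemma card_nbr:
  assumes "graph V E" "H \<subseteq> E"
  shows "card (nbr H x) = degree H x" and "nbr H x \<subseteq> V"
proof -
  have ed: "\<And>e. e \<in> H \<Longrightarrow> e \<subseteq> V \<and> card e = 2" using assms unfolding graph_def by auto
  show sub: "nbr H x \<subseteq> V" unfolding nbr_def using ed by auto
  have nx: "\<And>u. u \<in> nbr H x \<Longrightarrow> u \<noteq> x" unfolding nbr_def using ed by fastforce
  have "inj_on (\<lambda>u. {x, u}) (nbr H x)"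
    using nx by (auto simp: inj_on_def doubleton_eq_iff)
  moreover have "(\<lambda>u. {x, u}) ` nbr H x = {e \<in> H. x \<in> e}"
  proof
    show "(\<lambda>u. {x, u}) ` nbr H x \<subseteq> {e \<in> H. x \<in> e}" unfolding nbr_def by auto
    show "{e \<in> H. x \<in> e} \<subseteq> (\<lambda>u. {x, u}) ` nbr H x"
    proof
      fix e assume e: "e \<in> {e \<in> H. x \<in> e}"
      hence "\<exists>a b. e = {a, b} \<and> a \<noteq> b" using ed card_2_iff by blast
      then obtain a b where ab: "e = {a, b}" "a \<noteq> b" by blast
      show "e \<in> (\<lambda>u. {x, u}) ` nbr H x"
      proof (cases "x = a")
        case True thus ?thesis using e ab unfolding nbr_def by auto
      next
        case False
        hence "x = b" using e ab by auto
        hence "e = {x, a}" using ab by auto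
        thus ?thesis using e unfolding nbr_def by auto
      qed
    qed
  qed
  ultimately show "card (nbr H x) = degree H x"
    unfolding degree_def by (metis card_image)
qed

lemma degree_insert:
  assumes "e \<notin> H" "finite H"
  shows "degree (insert e H) v = (if v \<in> e then degree H v + 1 else degree H v)"
proof -
  have "{f \<in> insert e H. v \<in> f} = (if v \<in> e then insert e {f \<in> H. v \<in> f} else {f \<in> H. v \<in> f})"
    by auto
  thus ?thesis unfolding degree_def using assms by auto
qed

lemma C4_insert:
  assumes "C4_free H" "\<not> C4_free (insert e H)"
  shows "\<exists>u x y v. e = {v, u} \<and> {u, x} \<in> H \<and> {x, y} \<in> H \<and> {y, v} \<in> H \<and> distinct [u, x, y, v]"
proof -
  obtain a b c d where abcd: "distinct [a, b, c, d]" "{a, b} \<in> insert e H" "{b, c} \<in> insert e H"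
     "{c, d} \<in> insert e H" "{d, a} \<in> insert e H"
    using assms(2) unfolding C4_free_def by auto
  have ne: "{a,b} \<noteq> {b,c}" "{a,b} \<noteq> {c,d}" "{a,b} \<noteq> {d,a}" "{b,c} \<noteq> {c,d}" "{b,c} \<noteq> {d,a}" "{c,d} \<noteq> {d,a}"
    using abcd(1) by (auto simp: doubleton_eq_iff)
  have "\<not> ({a, b} \<in> H \<and> {b, c} \<in> H \<and> {c, d} \<in> H \<and> {d, a} \<in> H)"
    using assms(1) abcd(1) unfolding C4_free_def by auto
  hence disj: "e = {a,b} \<or> e = {b,c} \<or> e = {c,d} \<or> e = {d,a}" using abcd(2-) by auto
  have inH: "\<And>f. f \<in> insert e H \<Longrightarrow> f \<noteq> e \<Longrightarrow> f \<in> H" by blast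
  show ?thesis
  proof (rule disjE[OF disj])
    assume h: "e = {a,b}"
    have "{b,c} \<in> H" "{c,d} \<in> H" "{d,a} \<in> H" using abcd(2-) ne h by auto
    moreover have "distinct [b,c,d,a]" using abcd(1) by auto
    ultimately show ?thesis using h by blast
  next
    assume "e = {b,c} \<or> e = {c,d} \<or> e = {d,a}"
    thus ?thesis
    proof (elim disjE)
      assume h: "e = {b,c}"
      have "{c,d} \<in> H" "{d,a} \<in> H" "{a,b} \<in> H" using abcd(2-) ne h by auto
      moreover have "distinct [c,d,a,b]" using abcd(1) by auto
      ultimately show ?thesis using h by blast
    next
      assume h: "e = {c,d}"
      have "{d,a} \<in> H" "{a,b} \<in> H" "{b,c} \<in> H" using abcd(2-) ne h by auto
      moreover have "distinct [d,a,b,c]" using abcd(1) by auto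
      ultimately show ?thesis using h by blast
    next
      assume h: "e = {d,a}"
      have "{a,b} \<in> H" "{b,c} \<in> H" "{c,d} \<in> H" using abcd(2-) ne h by auto
      moreover have "distinct [a,b,c,d]" using abcd(1) by auto
      ultimately show ?thesis using h by blast
    qed
  qed
qed
lemma core:
  assumes G: "graph V E" and D1: "1 \<le> D" and DD: "D \<le> Dl" and dE: "\<forall>v\<in>V. degree E v \<le> Dl"
  shows "\<exists>H\<subseteq>E. C4_free H \<and> D * card E \<le> card H * (2*Dl - D + 2*D*(D-1)^2)"
proof -
  have fV: "finite V" using G unfolding graph_def by auto
  have EV: "\<And>e. e \<in> E \<Longrightarrow> e \<subseteq> V \<and> card e = 2" using G unfolding graph_def by auto
  have fE: "finite E" using G unfolding graph_def
    by (meson Pow_iff finite_Pow_iff finite_subset subsetI)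
  define M where "M = {H. H \<subseteq> E \<and> C4_free H \<and> (\<forall>v. degree H v \<le> D)}"
  have fM: "finite M" unfolding M_def using fE by auto
  have "{} \<in> M" unfolding M_def C4_free_def degree_def by auto
  hence "Max (card ` M) \<in> card ` M" using fM by (intro Max_in) auto
  then obtain H where HM: "H \<in> M" and Hc: "card H = Max (card ` M)" by auto
  have mx: "\<And>H'. H' \<in> M \<Longrightarrow> card H' \<le> card H" using fM Hc by simp
  have HE: "H \<subseteq> E" and HC4: "C4_free H" and Hd: "\<And>v. degree H v \<le> D" using HM unfolding M_def by auto
  have fH: "finite H" using HE fE finite_subset by blast
  define S where "S = {w\<in>V. degree H w = D}"
  define Od where "Od = Sigma V (nbr H)"
  define Sig where "Sig = Sigma Od (\<lambda>(x,y). (nbr H x - {y}) \<times> (nbr H y - {x}))"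
  define B1 where "B1 = (\<Union>w\<in>S. {e\<in>E-H. w\<in>e})"
  define B2 where "B2 = (\<lambda>((x,y),(u,v)). {v,u}) ` Sig"
  have fS: "finite S" unfolding S_def using fV by auto
  have fO: "finite Od" unfolding Od_def using fV card_nbr(2)[OF G HE]
    by (meson finite_SigmaI finite_subset)
  have fSig: "finite Sig" unfolding Sig_def using fO card_nbr(2)[OF G HE] fV
    by (auto intro!: finite_SigmaI finite_cartesian_product intro: finite_subset)
  have key: "e \<in> H \<union> B1 \<union> B2" if e: "e \<in> E" for e
  proof (cases "e \<in> H")
    case False
    have "card (insert e H) > card H" using False fH by simp
    hence "insert e H \<notin> M" using mx by force
    hence "\<not> C4_free (insert e H) \<or> (\<exists>v. \<not> degree (insert e H) v \<le> D)"
      unfolding M_def using e HE by auto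
    thus ?thesis
    proof
      assume "\<not> C4_free (insert e H)"
      then obtain u x y v where p: "e = {v, u}" "{u, x} \<in> H" "{x, y} \<in> H" "{y, v} \<in> H" "distinct [u, x, y, v]"
        using C4_insert[OF HC4] by blast
      have "x \<in> V" using p(3) HE EV by blast
      hence "(x,y) \<in> Od" unfolding Od_def nbr_def using p by auto
      moreover have "u \<in> nbr H x - {y}" "v \<in> nbr H y - {x}" unfolding nbr_def using p
        by (auto simp: insert_commute)
      ultimately have "((x,y),(u,v)) \<in> Sig" unfolding Sig_def by auto
      hence "e \<in> B2" unfolding B2_def using p(1) by force
      thus ?thesis by auto
    next
      assume "\<exists>v. \<not> degree (insert e H) v \<le> D"
      then obtain w where w: "\<not> degree (insert e H) w \<le> D" by blast
      have "w \<in> e" "degree H w = D" using w Hd[of w] degree_insert[OF False fH, of w]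
        by (auto split: if_splits)
      moreover have "w \<in> V" using e EV \<open>w \<in> e\<close> by blast
      ultimately have "e \<in> B1" unfolding B1_def S_def using e False by auto
      thus ?thesis by auto
    qed
  qed auto
  have hs: "(\<Sum>v\<in>V. degree H v) = 2 * card H" using handshake[OF G HE] .
  have "card E \<le> card (H \<union> B1 \<union> B2)"
    using key fH fSig fS unfolding B1_def B2_def by (intro card_mono) (auto simp: fE)
  also have "\<dots> \<le> card H + card B1 + card B2" by (meson card_Un_le add_le_mono le_trans order_refl)
  finally have m: "card E \<le> card H + card B1 + card B2" .
  have b1: "card B1 + card S * D \<le> card S * Dl"
  proof -
    have "card B1 \<le> (\<Sum>w\<in>S. card {e\<in>E-H. w\<in>e})" unfolding B1_def using fS by (rule card_UN_le)
    moreover have "card {e\<in>E-H. w\<in>e} + D \<le> Dl" if w: "w \<in> S" for w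
    proof -
      have eq: "{e\<in>E. w\<in>e} = {e\<in>H. w\<in>e} \<union> {e\<in>E-H. w\<in>e}" using HE by auto
      have "card {e\<in>E. w\<in>e} = card {e\<in>H. w\<in>e} + card {e\<in>E-H. w\<in>e}"
        unfolding eq using fE fH by (intro card_Un_disjoint) auto
      hence "degree E w = degree H w + card {e\<in>E-H. w\<in>e}" unfolding degree_def .
      thus ?thesis using w dE unfolding S_def by auto
    qed
    hence "(\<Sum>w\<in>S. card {e\<in>E-H. w\<in>e} + D) \<le> (\<Sum>w\<in>S. Dl)" by (intro sum_mono) auto
    ultimately show ?thesis by (simp add: sum.distrib)
  qed
  have sD: "card S * D \<le> 2 * card H"
  proof -
    have "card S * D = (\<Sum>w\<in>S. degree H w)" unfolding S_def by simp
    also have "\<dots> \<le> (\<Sum>v\<in>V. degree H v)" using fV unfolding S_def by (intro sum_mono2) auto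
    finally show ?thesis using hs by simp
  qed
  have cO: "card Od = 2 * card H"
    unfolding Od_def using fV card_nbr(2)[OF G HE] hs card_nbr(1)[OF G HE]
    by (subst card_SigmaI) (auto intro: finite_subset)
  have b2: "card B2 \<le> 2 * card H * (D-1)^2"
  proof -
    have "card B2 \<le> card Sig" unfolding B2_def using fSig by (rule card_image_le)
    also have "\<dots> = (\<Sum>p\<in>Od. card ((\<lambda>(x,y). (nbr H x - {y}) \<times> (nbr H y - {x})) p))"
      unfolding Sig_def using fO card_nbr(2)[OF G HE] fV
      by (subst card_SigmaI) (auto intro: finite_subset)
    also have "\<dots> \<le> (\<Sum>p\<in>Od. (D-1)^2)"
    proof (rule sum_mono)
      fix p assume "p \<in> Od"
      then obtain x y where p: "p = (x,y)" "y \<in> nbr H x" "x \<in> V" unfolding Od_def by auto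
      have xn: "x \<in> nbr H y" using p unfolding nbr_def by (auto simp: insert_commute)
      have fn: "\<And>z. finite (nbr H z)" using card_nbr(2)[OF G HE] fV by (meson finite_subset)
      have "card (nbr H x - {y}) \<le> D - 1" using p(2) fn card_nbr(1)[OF G HE, of x] Hd[of x] by auto
      moreover have "card (nbr H y - {x}) \<le> D - 1" using xn fn card_nbr(1)[OF G HE, of y] Hd[of y] by auto
      ultimately show "card ((\<lambda>(x,y). (nbr H x - {y}) \<times> (nbr H y - {x})) p) \<le> (D-1)^2"
        using p(1) by (simp add: card_cartesian_product power2_eq_square mult_le_mono)
    qed
    also have "\<dots> = 2 * card H * (D-1)^2" using cO by simp
    finally show ?thesis .
  qed
  have "D * card E \<le> D * card H + D * card B1 + D * card B2" using m
    by (metis add_mult_distrib2 mult_le_mono2)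
  also have "D * card B1 \<le> 2 * card H * (Dl - D)"
  proof -
    have "card B1 \<le> card S * (Dl - D)" using b1 by (simp add: diff_mult_distrib2)
    hence "D * card B1 \<le> (card S * D) * (Dl - D)" by (metis mult.commute mult.left_commute mult_le_mono2)
    also have "\<dots> \<le> 2 * card H * (Dl - D)" using sD by (rule mult_le_mono1)
    finally show ?thesis .
  qed
  also have "D * card B2 \<le> D * (2 * card H * (D-1)^2)" using b2 by simp
  finally have "D * card E \<le> D * card H + 2 * card H * (Dl - D) + D * (2 * card H * (D - 1)\<^sup>2)"
    by simp
  also have "\<dots> = card H * (D + 2 * (Dl - D) + 2*D*(D-1)^2)" by (simp add: algebra_simps)
  also have "D + 2 * (Dl - D) + 2*D*(D-1)^2 = 2*Dl - D + 2*D*(D-1)^2" using DD by simp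
  finally show ?thesis using HE HC4 by blast
qed

theorem lemma10:
  fixes V :: "'a set" and E :: "'a set set"
  assumes "graph V E" and "V \<noteq> {}"
    and "avg_degree V E \<ge> real (max_degree V E) powr (3/4)"
  shows "\<exists>V' E'. subgraph V' E' V E \<and> V' \<noteq> {} \<and> C4_free E' \<and>
           avg_degree V' E' \<ge> avg_degree V E * real (max_degree V E) powr (-3/4) / 4"
proof -
  define Dl where "Dl = max_degree V E"
  have fV: "finite V" using assms(1) unfolding graph_def by auto
  have dE: "\<forall>v\<in>V. degree E v \<le> Dl" unfolding Dl_def max_degree_def using fV by auto
  have nV: "real (card V) > 0" using fV assms(2) by (simp add: card_gt_0_iff)
  show ?thesis
  proof (cases "Dl = 0")
    case True
    have "subgraph V {} V E" unfolding subgraph_def by auto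
    moreover have "C4_free {}" unfolding C4_free_def by auto
    moreover have "avg_degree V {} \<ge> avg_degree V E * real (max_degree V E) powr (-3/4) / 4"
      using True unfolding Dl_def avg_degree_def by simp
    ultimately show ?thesis using assms(2) by blast
  next
    case False
    hence D1: "real Dl \<ge> 1" by simp
    define r where "r = real Dl powr (1/4)"
    have r1: "r \<ge> 1" unfolding r_def using D1 by (simp add: ge_one_powr_ge_zero)
    have r4: "r^4 = real Dl" unfolding r_def using D1 by (simp add: powr_power)
    have r3: "real Dl powr (-3/4) = 1 / r^3" unfolding r_def using D1
      by (simp add: powr_power powr_minus_divide)
    define D where "D = nat (ceiling r)"
    have Dr: "real D \<ge> r" "real D < r + 1" unfolding D_def using r1
      by (auto simp: of_nat_nat) linarith+
    have r43: "r^4 = r * r^3" by (simp add: numeral_eq_Suc)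
    have "r * 1 \<le> r * r^3" using r1 one_le_power[OF r1, of 3] by (intro mult_left_mono) auto
    hence "r \<le> r^4" using r43 by simp
    hence "r \<le> real Dl" using r4 by simp
    hence DDl: "D \<le> Dl" unfolding D_def
      by (metis ceiling_le nat_le_iff of_int_of_nat_eq)
    have D1': "1 \<le> D" using Dr r1 by linarith
    obtain H where HE: "H \<subseteq> E" and HC: "C4_free H"
      and Hb: "D * card E \<le> card H * (2*Dl - D + 2*D*(D-1)^2)"
      using core[OF assms(1) D1' DDl dE] by blast
    have K: "real (2*Dl - D + 2*D*(D-1)^2) = 2 * real Dl - real D + 2 * real D * (real D - 1)^2"
      using DDl D1' by (simp add: of_nat_diff)
    have "real D - 1 \<le> r" using Dr by linarith
    moreover have "real D - 1 \<ge> 0" using D1' by simp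
    ultimately have "(real D - 1)^2 \<le> r^2" by (simp add: power_mono)
    also have "r^2 \<le> r^3" using r1 by (simp add: power_increasing)
    finally have a1: "2 * real D * (real D - 1)^2 \<le> 2 * real D * r^3" using D1' by simp
    have "r * r^3 \<le> real D * r^3" using Dr r1 by (simp add: mult_right_mono)
    hence a2: "2 * real Dl \<le> 2 * real D * r^3" using r4 r43 by simp
    have "real D * real (card E) \<le> real (card H) * (2 * real Dl - real D + 2 * real D * (real D - 1)^2)"
      using Hb K by (metis of_nat_le_iff of_nat_mult)
    also have "\<dots> \<le> real (card H) * (4 * real D * r^3)"
      using a1 a2 D1' by (intro mult_left_mono) (linarith, simp)
    finally have "real D * real (card E) \<le> real D * (4 * r^3 * real (card H))" by (simp add: algebra_simps)
    hence mE: "real (card E) \<le> 4 * r^3 * real (card H)" using D1' by simp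
    have "avg_degree V E * real (max_degree V E) powr (-3/4) / 4 = 2 * real (card E) / (real (card V) * 4 * r^3)"
      unfolding avg_degree_def Dl_def[symmetric] r3 by simp
    also have "\<dots> \<le> 2 * (4 * r^3 * real (card H)) / (real (card V) * 4 * r^3)"
      using mE nV r1 by (intro divide_right_mono) (auto simp: algebra_simps)
    also have "\<dots> = avg_degree V H" unfolding avg_degree_def using r1 by simp
    finally have "avg_degree V H \<ge> avg_degree V E * real (max_degree V E) powr (-3/4) / 4" .
    moreover have "subgraph V H V E" unfolding subgraph_def using HE assms(1) unfolding graph_def by auto
    ultimately show ?thesis using HC assms(2) by blast
  qed
qed

end
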